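(* Let $H_n = \sum_{j=1}^n \frac{1}{j}$ denote the $n$th harmonic number and $\zeta$ the Riemann zeta function. Then $$\sum_{n = 1}^\infty H_{2n}\left(\zeta(2) - 1 - \frac{1}{2^2} - \ldots - \frac{1}{n^2} - \frac{1}{n} \right) = \log(2) - \frac{7}{8}\zeta(3) - 1.$$ *)

theory Defs
  imports "HOL-Analysis.Analysis"
begin

definition zeta_real :: "real \<Rightarrow> real" where
  "zeta_real s = (\<Sum>k. 1 / (real (Suc k)) powr s)"

end

theory Submission
  imports Defs "HOL-Real_Asymp.Real_Asymp"
begin


lemma G1:
  fixes F :: "nat \<times> nat \<Rightarrow> real"
  assumes nn: "\<And>x. F x \<ge> 0"
    and fib: "\<And>m. ((\<lambda>n. F (m, n)) has_sum g m) UNIV"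
    and g: "(g has_sum S) UNIV"
  shows "(F has_sum S) UNIV"
proof -
  have "F summable_on Sigma UNIV (\<lambda>_. UNIV)"
    by (rule summable_on_SigmaI[where g=g]) (use fib g nn in \<open>auto intro: has_sum_imp_summable\<close>)
  hence "(F has_sum S) (Sigma UNIV (\<lambda>_. UNIV))"
    by (intro has_sum_SigmaI[OF _ g]) (use fib in auto)
  thus ?thesis by simp
qed

lemma G2:
  fixes F :: "nat \<times> nat \<Rightarrow> real"
  assumes "(F has_sum S) UNIV"
    and fib: "\<And>m. ((\<lambda>n. F (m, n)) has_sum g m) UNIV"
  shows "(g has_sum S) UNIV"
  by (rule has_sum_SigmaD[where B="\<lambda>_. UNIV"]) (use assms in auto)

lemma diag_bij: "bij_betw (\<lambda>(w,m). (m, w - m)) (Sigma UNIV (\<lambda>w. {..w})) (UNIV :: (nat \<times> nat) set)"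
  by (rule bij_betw_byWitness[where f'="\<lambda>(m,n). (m+n, m)"]) (auto simp: image_def)

lemma G3:
  fixes F :: "nat \<times> nat \<Rightarrow> real"
  assumes nn: "\<And>x. F x \<ge> 0"
    and d: "((\<lambda>w. \<Sum>m\<le>w. F (m, w - m)) has_sum S) UNIV"
  shows "(F has_sum S) UNIV"
proof -
  let ?G = "\<lambda>x. F ((\<lambda>(w,m). (m, w - m)) x)"
  have fib: "\<And>w. w \<in> UNIV \<Longrightarrow> ((\<lambda>m. ?G (w, m)) has_sum (\<Sum>m\<le>w. F (m, w - m))) {..w}"
    by simp
  have "?G summable_on Sigma UNIV (\<lambda>w. {..w})"
    by (rule summable_on_SigmaI[OF fib]) (use d nn in \<open>auto intro: has_sum_imp_summable\<close>)
  hence "(?G has_sum S) (Sigma UNIV (\<lambda>w. {..w}))"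
    by (intro has_sum_SigmaI[OF fib d])
  thus ?thesis using has_sum_reindex_bij_betw[OF diag_bij, of F S] by simp
qed

lemma G4:
  fixes F :: "nat \<times> nat \<Rightarrow> real"
  assumes "(F has_sum S) UNIV"
  shows "((\<lambda>w. \<Sum>m\<le>w. F (m, w - m)) has_sum S) UNIV"
proof -
  let ?G = "\<lambda>x. F ((\<lambda>(w,m). (m, w - m)) x)"
  have "(?G has_sum S) (Sigma UNIV (\<lambda>w. {..w}))"
    using has_sum_reindex_bij_betw[OF diag_bij, of F S] assms by simp
  thus ?thesis
    by (rule has_sum_SigmaD) simp
qed

lemma TEL:
  fixes g :: "nat \<Rightarrow> real"
  assumes "g \<longlonglongrightarrow> 0"
  shows "(\<lambda>n. g n - g (n + k)) sums (\<Sum>i<k. g i)"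
proof -
  have "(\<lambda>n. \<Sum>i<k. g (n + i) - g (Suc (n + i))) sums (\<Sum>i<k. g i)"
  proof (rule sums_sum)
    fix i
    have "(\<lambda>n. g (n + i)) \<longlonglongrightarrow> 0"
      using LIMSEQ_ignore_initial_segment[OF assms, of i] by simp
    from telescope_sums'[OF this] show "(\<lambda>n. g (n + i) - g (Suc (n + i))) sums g i"
      by simp
  qed
  moreover have "(\<Sum>i<k. g (n + i) - g (Suc (n + i))) = g n - g (n + k)" for n
    using sum_lessThan_telescope'[of "\<lambda>i. g (n + i)" k] by simp
  ultimately show ?thesis by simp
qed

lemma ABEL:
  fixes u v t :: "nat \<Rightarrow> real"
  assumes u: "\<And>j. u j \<ge> 0" and v: "\<And>j. v j \<ge> 0"
    and t: "\<And>j. (\<lambda>d. v (j + d)) sums t j"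
  shows "((\<lambda>j. u j * t j) has_sum S) UNIV \<longleftrightarrow> ((\<lambda>w. (\<Sum>j\<le>w. u j) * v w) has_sum S) UNIV"
proof -
  define F where "F = (\<lambda>(j,d). u j * v (j + d))"
  have nn: "F x \<ge> 0" for x using u v by (auto simp: F_def split: prod.splits)
  have fib: "((\<lambda>d. F (j, d)) has_sum (u j * t j)) UNIV" for j
  proof -
    have "((\<lambda>d. v (j + d)) has_sum t j) UNIV"
      by (rule sums_nonneg_imp_has_sum[OF t]) (use v in auto)
    from has_sum_cmult_right[OF this, of "u j"] show ?thesis by (simp add: F_def)
  qed
  have dg: "(\<Sum>m\<le>w. F (m, w - m)) = (\<Sum>j\<le>w. u j) * v w" for w
    by (simp add: F_def sum_distrib_right)
  show ?thesis
  proof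
    assume "((\<lambda>j. u j * t j) has_sum S) UNIV"
    from G4[OF G1[OF nn fib this]] show "((\<lambda>w. (\<Sum>j\<le>w. u j) * v w) has_sum S) UNIV"
      by (simp add: dg)
  next
    assume "((\<lambda>w. (\<Sum>j\<le>w. u j) * v w) has_sum S) UNIV"
    hence "((\<lambda>w. \<Sum>m\<le>w. F (m, w - m)) has_sum S) UNIV" by (simp add: dg)
    from G2[OF G3[OF nn this] fib] show "((\<lambda>j. u j * t j) has_sum S) UNIV" .
  qed
qed


lemma Z2: "(\<lambda>k. 1 / (real (Suc k))^2) sums zeta_real 2"
proof -
  have "summable (\<lambda>k. inverse (real k ^ 2))" by (rule inverse_power_summable) simp
  hence "summable (\<lambda>k. inverse (real (Suc k) ^ 2))"
    by (subst summable_Suc_iff) 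
  hence s: "summable (\<lambda>k. 1 / (real (Suc k))^2)" by (simp add: divide_inverse)
  have "zeta_real 2 = (\<Sum>k. 1 / (real (Suc k))^2)"
    unfolding zeta_real_def by simp
  with s show ?thesis by (simp add: summable_sums)
qed

lemma Z3: "(\<lambda>k. 1 / (real (Suc k))^3) sums zeta_real 3"
proof -
  have "summable (\<lambda>k. inverse (real k ^ 3))" by (rule inverse_power_summable) simp
  hence "summable (\<lambda>k. inverse (real (Suc k) ^ 3))"
    by (subst summable_Suc_iff) 
  hence s: "summable (\<lambda>k. 1 / (real (Suc k))^3)" by (simp add: divide_inverse)
  have "zeta_real 3 = (\<Sum>k. 1 / (real (Suc k))^3)"
    unfolding zeta_real_def by simp
  with s show ?thesis by (simp add: summable_sums)
qed

lemma LN: "(\<lambda>j. 1 / (2 * real j + 1) - 1 / (2 * real j + 2)) sums ln 2"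
proof -
  from sums_group[OF alternating_harmonic_series_sums, of 2]
  have "(\<lambda>n. \<Sum>i\<in>{n * 2..<n * 2 + 2}. (- 1) ^ i / real (Suc i)) sums ln 2" by simp
  moreover have "(\<Sum>i\<in>{n * 2..<n * 2 + 2}. (- 1) ^ i / real (Suc i)) = 1 / (2 * real n + 1) - 1 / (2 * real n + 2)" for n
  proof -
    have "{n * 2..<n * 2 + 2} = {2*n, Suc (2*n)}" by auto
    thus ?thesis by (simp add: add_ac)
  qed
  ultimately show ?thesis by simp
qed

lemma harm_Suc_eq: "harm (Suc n) = (\<Sum>j\<le>n. 1 / (real j + 1) :: real)"
  by (simp add: harm_altdef lessThan_Suc_atMost[symmetric] inverse_eq_divide add_ac)

definition odd_harm :: "nat \<Rightarrow> real" where
  "odd_harm n = (\<Sum>a<n. 1 / (2 * real a + 1))"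

lemma harm_double: "harm (2 * n) = odd_harm n + harm n / (2::real)"
proof (induction n)
  case 0 then show ?case by (simp add: odd_harm_def harm_def)
next
  case (Suc n)
  have e: "2 * Suc n = Suc (Suc (2 * n))" by simp
  show ?case using Suc
    by (simp add: e harm_Suc odd_harm_def field_simps)
qed

lemma harm_double_Suc: "harm (2 * Suc w) = (\<Sum>j\<le>w. 1 / (2 * real j + 1) + 1 / (2 * real j + 2) :: real)"
proof (induction w)
  case 0 then show ?case by (simp add: harm_def eval_nat_numeral)
next
  case (Suc w)
  have e: "2 * Suc (Suc w) = Suc (Suc (2 * Suc w))" by simp
  have "harm (2 * Suc (Suc w)) = harm (2 * Suc w) + (1 / (2 * real (Suc w) + 1) + 1 / (2 * real (Suc w) + 2) :: real)"
    by (simp only: e harm_Suc) (simp add: inverse_eq_divide add_ac)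
  also have "\<dots> = (\<Sum>j\<le>Suc w. 1 / (2 * real j + 1) + 1 / (2 * real j + 2))"
    using Suc by (simp only: sum.atMost_Suc)
  finally show ?case .
qed

lemma A_alg0:
  fixes x H h p q r :: real
  assumes "(2*x+1)*p = 1" "(2*x+2)*q = 1" "(x+1)*r = 1"
  shows "(x + 1/2) * H + h / 4 - x + (H + p + q) =
    (x + 1 + 1/2) * (H + p + q) + (h + r) / 4 - (x + 1)"
  using assms by algebra
lemma A_alg:
  fixes x H h :: real
  assumes "x \<ge> 0"
  shows "(x + 1/2) * H + h / 4 - x + (H + 1 / (2 * x + 1) + 1 / (2 * x + 2)) =
    (x + 1 + 1/2) * (H + 1 / (2 * x + 1) + 1 / (2 * x + 2)) + (h + 1 / (x + 1)) / 4 - (x + 1)"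
  by (rule A_alg0) (use assms in auto)

lemma A_closed: "(\<Sum>j<n. harm (2 * Suc j)) = (real n + 1/2) * harm (2 * n) + harm n / 4 - (real n :: real)"
proof (induction n)
  case 0 then show ?case by (simp add: harm_def)
next
  case (Suc n)
  have e: "2 * Suc n = Suc (Suc (2 * n))" by simp
  have h2: "harm (2 * Suc n) = harm (2 * n) + 1 / (2 * real n + 1) + (1 / (2 * real n + 2) :: real)"
    by (simp only: e harm_Suc) (simp add: inverse_eq_divide add_ac)
  have h1: "harm (Suc n) = harm n + 1 / (real n + 1 :: real)"
    by (simp add: harm_Suc inverse_eq_divide add_ac)
  have "(\<Sum>j<Suc n. harm (2 * Suc j)) = (\<Sum>j<n. harm (2 * Suc j)) + harm (2 * Suc n)"
    by simp
  also have "\<dots> = (real n + 1/2) * harm (2 * n) + harm n / 4 - real n + (harm (2 * n) + 1 / (2 * real n + 1) + (1 / (2 * real n + 2) :: real))"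
    by (simp only: Suc h2)
  also have "\<dots> = (real (Suc n) + 1/2) * (harm (2 * n) + 1 / (2 * real n + 1) + (1 / (2 * real n + 2))) + (harm n + 1 / (real n + 1)) / 4 - real (Suc n)"
    using A_alg[of "real n" "harm (2 * n)" "harm n"] by simp
  finally show ?case by (simp only: h1 h2)
qed


lemma tail_v1: "(\<lambda>d. 1 / ((real (j + d) + 1) * (real (j + d) + 2))) sums (1 / (real j + 1))"
proof -
  have lim: "(\<lambda>d. 1 / (real (j + d) + 1)) \<longlonglongrightarrow> 0" by real_asymp
  from TEL[OF lim, of 1] show ?thesis
    by (simp add: field_simps)
qed

lemma S3: "(\<lambda>w. harm (Suc w) / ((real w + 1) * (real w + 2))) sums zeta_real 2"
proof -
  have "((\<lambda>j. 1 / (real j + 1) * (1 / (real j + 1))) has_sum zeta_real 2) UNIV"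
    by (rule sums_nonneg_imp_has_sum) (use Z2 in \<open>simp_all add: power2_eq_square add_ac\<close>)
  hence "((\<lambda>w. (\<Sum>j\<le>w. 1 / (real j + 1)) * (1 / ((real w + 1) * (real w + 2)))) has_sum zeta_real 2) UNIV"
    by (subst ABEL[symmetric]) (use tail_v1 in auto)
  from has_sum_imp_sums[OF this] show ?thesis by (simp add: harm_Suc_eq)
qed

lemma S5: "(\<lambda>w. 1 / (real w + 2)^2) sums (zeta_real 2 - 1)"
proof -
  have "(\<lambda>n. 1 / (real (Suc (Suc n)))^2) sums (zeta_real 2 - 1)"
    using sums_Suc_iff[of "\<lambda>k. 1 / (real (Suc k))^2"] Z2 by simp
  thus ?thesis by (simp add: add_ac)
qed

lemma S1: "(\<lambda>w. harm (2 * Suc w) / ((real w + 1) * (real w + 2))) sums (2 * ln 2 + zeta_real 2 / 2)"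
proof -
  have e0: "(p + q) * r = 2 * (p - q) + 1/2 * r^2"
    if "(2*x+1)*p = 1" "(2*x+2)*q = 1" "(x+1)*r = 1" for x p q r :: real
    using that by algebra
  have e: "(1 / (2 * real j + 1) + 1 / (2 * real j + 2)) * (1 / (real j + 1)) =
      2 * (1 / (2 * real j + 1) - 1 / (2 * real j + 2)) + 1/2 * (1 / (real (Suc j))^2)" for j
    using e0[of "real j" "1 / (2 * real j + 1)" "1 / (2 * real j + 2)" "1 / (real j + 1)"]
    by (simp add: power_divide add_ac)
  have "(\<lambda>j. 2 * (1 / (2 * real j + 1) - 1 / (2 * real j + 2)) + 1/2 * (1 / (real (Suc j))^2)) sums (2 * ln 2 + 1/2 * zeta_real 2)"
    by (intro sums_add sums_mult LN Z2)
  hence "((\<lambda>j. (1 / (2 * real j + 1) + 1 / (2 * real j + 2)) * (1 / (real j + 1))) has_sum (2 * ln 2 + 1/2 * zeta_real 2)) UNIV"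
    by (intro sums_nonneg_imp_has_sum) (simp_all only: e[symmetric], simp)
  hence "((\<lambda>w. (\<Sum>j\<le>w. 1 / (2 * real j + 1) + 1 / (2 * real j + 2)) * (1 / ((real w + 1) * (real w + 2)))) has_sum (2 * ln 2 + 1/2 * zeta_real 2)) UNIV"
    by (subst ABEL[symmetric]) (use tail_v1 in auto)
  from has_sum_imp_sums[OF this]
  have "(\<lambda>w. harm (2 * Suc w) * (1 / ((real w + 1) * (real w + 2)))) sums (2 * ln 2 + 1/2 * zeta_real 2)"
    by (simp only: harm_double_Suc)
  thus ?thesis by simp
qed


definition FF :: "nat \<times> nat \<Rightarrow> real" where
  "FF = (\<lambda>(m,n). 1 / ((real m + 1) * (real n + 1) * (real m + real n + 2)))"

lemma alg1: "(x+1)*p = 1 \<Longrightarrow> (y+1)*q = 1 \<Longrightarrow> (x+y+2)*r = 1 \<Longrightarrow> p^2*(q - r) = p*q*(r::real)"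
  by algebra

lemma alg2: "(x+1)*p = 1 \<Longrightarrow> (y+1)*q = 1 \<Longrightarrow> (x+y+2)*r = 1 \<Longrightarrow> p*q*r = r^2*(p + (q::real))"
  by algebra

lemma FF_nonneg: "FF x \<ge> 0"
  by (auto simp: FF_def split: prod.splits)

lemma FF_fib: "(\<lambda>n. FF (m, n)) sums (harm (Suc m) / (real m + 1)^2)"
proof -
  have lim: "(\<lambda>n. 1 / (real n + 1)) \<longlonglongrightarrow> 0" by real_asymp
  from sums_mult[OF TEL[OF lim, of "Suc m"], of "1 / (real m + 1)^2"]
  have "(\<lambda>n. 1 / (real m + 1)^2 * (1 / (real n + 1) - 1 / (real (n + Suc m) + 1))) sums
         (1 / (real m + 1)^2 * (\<Sum>i<Suc m. 1 / (real i + 1)))" .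
  moreover have "1 / (real m + 1)^2 * (1 / (real n + 1) - 1 / (real (n + Suc m) + 1)) = FF (m, n)" for n
  proof -
    have "(1 / (real m + 1))^2 * (1 / (real n + 1) - 1 / (real (n + Suc m) + 1)) = 1 / (real m + 1) * (1 / (real n + 1)) * (1 / (real (n + Suc m) + 1))"
      by (rule alg1[of "real m" _ "real n"]) (simp_all add: field_simps)
    thus ?thesis by (simp add: FF_def power_one_over add_ac)
  qed
  moreover have "(\<Sum>i<Suc m. 1 / (real i + 1)) = harm (Suc m)"
    by (simp add: harm_altdef inverse_eq_divide add_ac)
  ultimately show ?thesis by simp
qed

lemma sum_rev_atMost: "(\<Sum>m\<le>w. f (w - m)) = (\<Sum>m\<le>(w::nat). (f m :: real))"
  by (rule sum.reindex_bij_witness[where i="\<lambda>m. w - m" and j="\<lambda>m. w - m"]) auto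

lemma FF_diag: "(\<Sum>m\<le>w. FF (m, w - m)) = 2 * harm (Suc w) / (real w + 2)^2"
proof -
  have "FF (m, w - m) = 1 / (real w + 2)^2 * (1 / (real m + 1) + 1 / (real (w - m) + 1))" if "m \<le> w" for m
  proof -
    have "1 / (real m + 1) * (1 / (real (w - m) + 1)) * (1 / (real w + 2)) = (1 / (real w + 2))^2 * (1 / (real m + 1) + 1 / (real (w - m) + 1))"
      by (rule alg2[of "real m" _ "real (w - m)"]) (use that in \<open>simp_all add: field_simps of_nat_diff\<close>)
    moreover have "real m + real (w - m) + 2 = real w + 2" using that by simp
    ultimately show ?thesis by (simp add: FF_def power_one_over)
  qed
  hence "(\<Sum>m\<le>w. FF (m, w - m)) = (\<Sum>m\<le>w. 1 / (real w + 2)^2 * (1 / (real m + 1) + 1 / (real (w - m) + 1)))"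
    by (intro sum.cong refl) simp
  also have "\<dots> = 1 / (real w + 2)^2 * ((\<Sum>m\<le>w. 1 / (real m + 1)) + (\<Sum>m\<le>w. 1 / (real (w - m) + 1)))"
    by (simp only: sum_distrib_left[symmetric] sum.distrib)
  also have "(\<Sum>m\<le>w. 1 / (real (w - m) + 1)) = (\<Sum>m\<le>w. 1 / (real m + 1))"
    by (rule sum_rev_atMost[of "\<lambda>m. 1 / (real m + 1)"])
  finally show ?thesis by (simp add: harm_Suc_eq)
qed

lemma S4_and_P: "(\<lambda>w. harm (Suc w) / (real w + 2)^2) sums zeta_real 3 \<and> (FF has_sum (2 * zeta_real 3)) UNIV"
proof -
  define s4 where "s4 = (\<Sum>w. harm (Suc w) / (real w + 2)^2)"
  have "summable (\<lambda>w. harm (Suc w) / (real w + 2)^2)"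
  proof (rule summable_comparison_test')
    show "summable (\<lambda>w. harm (Suc w) / ((real w + 1) * (real w + 2)))" using S3 by (rule sums_summable)
    show "norm (harm (Suc w) / (real w + 2)^2) \<le> harm (Suc w) / ((real w + 1) * (real w + 2))" for w
    proof -
      have "(real w + 1) * (real w + 2) \<le> (real w + 2)^2" by (simp add: power2_eq_square)
      moreover have "0 \<le> (harm (Suc w) :: real)" by (rule harm_nonneg)
      ultimately show ?thesis
        by (simp add: frac_le)
    qed
  qed
  hence s4: "(\<lambda>w. harm (Suc w) / (real w + 2)^2) sums s4" by (simp add: s4_def summable_sums)
  have "((\<lambda>w. \<Sum>m\<le>w. FF (m, w - m)) has_sum (2 * s4)) UNIV"
    unfolding FF_diag
    by (rule sums_nonneg_imp_has_sum) (use sums_mult[OF s4, of 2] in \<open>simp_all add: harm_nonneg\<close>)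
  hence P: "(FF has_sum (2 * s4)) UNIV" by (rule G3[OF FF_nonneg])
  have "((\<lambda>m. harm (Suc m) / (real m + 1)^2) has_sum (2 * s4)) UNIV"
    by (rule G2[OF P]) (rule sums_nonneg_imp_has_sum[OF FF_fib FF_nonneg])
  hence "(\<lambda>m. harm (Suc m) / (real m + 1)^2) sums (2 * s4)" by (rule has_sum_imp_sums)
  hence a: "(\<lambda>w. harm (Suc (Suc w)) / (real (Suc w) + 1)^2) sums (2 * s4 - 1)"
    using sums_Suc_iff[of "\<lambda>m. harm (Suc m) / (real m + 1)^2" "2 * s4 - 1"] by (simp add: harm_def)
  have z3: "(\<lambda>w. 1 / (real w + 2)^3) sums (zeta_real 3 - 1)"
  proof -
    have "(\<lambda>n. 1 / (real (Suc (Suc n)))^3) sums (zeta_real 3 - 1)"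
      using sums_Suc_iff[of "\<lambda>k. 1 / (real (Suc k))^3"] Z3 by simp
    thus ?thesis by (simp add: add_ac)
  qed
  have "harm (Suc (Suc w)) / (real (Suc w) + 1)^2 = harm (Suc w) / (real w + 2)^2 + 1 / (real w + 2)^3" for w
  proof -
    have "harm (Suc (Suc w)) = harm (Suc w) + (1 / (real w + 2) :: real)"
      by (simp add: harm_Suc[of "Suc w"] inverse_eq_divide add_ac)
    moreover have hq: "(H + q) * q^2 = H * q^2 + q^3" for H q :: real by algebra
    ultimately show ?thesis
      using hq[of "harm (Suc w)" "inverse (real w + 2)"] by (simp add: power_inverse divide_inverse add_ac)
  qed
  hence "(\<lambda>w. harm (Suc (Suc w)) / (real (Suc w) + 1)^2) sums (s4 + (zeta_real 3 - 1))"
    using sums_add[OF s4 z3] by simp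
  with a have "2 * s4 - 1 = s4 + (zeta_real 3 - 1)" using sums_unique2 by blast
  hence "s4 = zeta_real 3" by simp
  with s4 P show ?thesis by simp
qed


definition hh :: "nat \<Rightarrow> nat \<Rightarrow> nat \<times> nat \<Rightarrow> nat \<times> nat" where
  "hh i j = (\<lambda>(a,b). (2*a+i, 2*b+j))"
lemma range_hh: "i < 2 \<Longrightarrow> j < 2 \<Longrightarrow> range (hh i j) = {(m,n). m mod 2 = i \<and> n mod 2 = j}"
proof (intro set_eqI iffI)
  fix x assume "i < 2" "j < 2" "x \<in> range (hh i j)" thus "x \<in> {(m,n). m mod 2 = i \<and> n mod 2 = j}" by (auto simp: hh_def)
next
  fix x assume "x \<in> {(m,n). m mod 2 = i \<and> n mod 2 = j}"
  then obtain m n :: nat where x: "x = (m, n)" "m mod 2 = i" "n mod 2 = j" by auto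
  hence "x = hh i j (m div 2, n div 2)" by (simp add: hh_def) (metis div_mult_mod_eq mult.commute)
  thus "x \<in> range (hh i j)" by blast
qed
lemma inj_hh: "inj (hh i j)" by (auto simp: inj_def hh_def)
lemma U: "range (hh 1 1) \<union> range (hh 0 0) \<union> range (hh 1 0) \<union> range (hh 0 1) = UNIV"
  by (auto simp: range_hh)
lemma D1: "range (hh 1 1) \<inter> range (hh 0 0) = {}" 
  by (auto simp: range_hh)
lemma D2: "(range (hh 1 1) \<union> range (hh 0 0)) \<inter> range (hh 1 0) = {}" 
  by (auto simp: range_hh)
lemma D3: "(range (hh 1 1) \<union> range (hh 0 0) \<union> range (hh 1 0)) \<inter> range (hh 0 1) = {}" 
  by (auto simp: range_hh)

lemma alg3: "(2*x+2)*p = 1 \<Longrightarrow> (x+1)*r = 1 \<Longrightarrow> 2 * (p^2 * 2 * Q) = Q * (r::real)^2"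
  by algebra

lemma alg4: "(2*x+2)*p = 1 \<Longrightarrow> (x+1)*r = 1 \<Longrightarrow> 4 * (Q * p^2) = Q * (r::real)^2"
  by algebra

lemma part_has_sum:
  assumes P: "(FF has_sum P) UNIV" and inj: "inj (h :: nat \<times> nat \<Rightarrow> nat \<times> nat)"
  shows "((FF \<circ> h) has_sum (infsum (FF \<circ> h) UNIV)) UNIV" "(FF has_sum (infsum (FF \<circ> h) UNIV)) (range h)"
proof -
  have "FF summable_on range h"
    by (rule summable_on_subset_banach[OF has_sum_imp_summable[OF P]]) simp
  hence "(FF \<circ> h) summable_on UNIV" using summable_on_reindex[OF inj] by blast
  thus a: "((FF \<circ> h) has_sum (infsum (FF \<circ> h) UNIV)) UNIV" by simp
  show "(FF has_sum (infsum (FF \<circ> h) UNIV)) (range h)"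
    using has_sum_reindex[OF inj] a by blast
qed

lemma EO: "(\<lambda>w. odd_harm (Suc w) / (real w + 1)^2) sums (7/4 * zeta_real 3)"
proof -
  define P where "P = 2 * zeta_real 3"
  have P: "(FF has_sum P) UNIV" using S4_and_P by (simp add: P_def)
  define P00 where "P00 = infsum (FF \<circ> hh 1 1) UNIV"
  define P11 where "P11 = infsum (FF \<circ> hh 0 0) UNIV"
  define P01 where "P01 = infsum (FF \<circ> hh 1 0) UNIV"
  define P10 where "P10 = infsum (FF \<circ> hh 0 1) UNIV"
  note hs00 = part_has_sum[OF P inj_hh, of 1 1, folded P00_def]
  note hs11 = part_has_sum[OF P inj_hh, of 0 0, folded P11_def]
  note hs01 = part_has_sum[OF P inj_hh, of 1 0, folded P01_def]
  note hs10 = part_has_sum[OF P inj_hh, of 0 1, folded P10_def]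
  have "(FF has_sum (P00 + P11 + P01 + P10)) (range (hh 1 1) \<union> range (hh 0 0) \<union> range (hh 1 0) \<union> range (hh 0 1))"
    by (intro has_sum_Un_disjoint hs00(2) hs11(2) hs01(2) hs10(2) D1 D2 D3)
  hence sumP: "P = P00 + P11 + P01 + P10" using P U has_sum_unique by (metis)
  have "(FF \<circ> hh 1 1) x = 1/8 * FF x" for x
  proof -
    obtain a b where x: "x = (a, b)" by fastforce
    have e1: "real (2*a+1) + 1 = 2 * (real a + 1)" "real (2*b+1) + 1 = 2 * (real b + 1)"
      and e3: "real (2*a+1) + real (2*b+1) + 2 = 2 * (real a + real b + 2)" by simp_all
    show ?thesis
      by (simp only: x FF_def hh_def comp_def prod.case e1 e3) (simp, simp add: algebra_simps)
  qed
  hence "FF \<circ> hh 1 1 = (\<lambda>x. 1/8 * FF x)" by (simp add: fun_eq_iff del: comp_apply)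
  hence "((FF \<circ> hh 1 1) has_sum (1/8 * P)) UNIV" using has_sum_cmult_right[OF P, of "1/8"] by simp
  hence P00: "P00 = P / 8" using hs00(1) has_sum_unique by fastforce
  have "FF \<circ> hh 0 1 = (FF \<circ> hh 1 0) \<circ> prod.swap"
    by (auto simp: hh_def hh_def FF_def fun_eq_iff add_ac mult_ac)
  moreover have "(((FF \<circ> hh 1 0) \<circ> prod.swap) has_sum P01) UNIV"
    using has_sum_reindex[of prod.swap UNIV "FF \<circ> hh 1 0" P01] hs01(1) by simp
  ultimately have P10: "P10 = P01" using hs10(1) has_sum_unique by metis
  have d11: "(\<Sum>a\<le>w. (FF \<circ> hh 0 0) (a, w - a)) = (1 / (2 * real w + 2))^2 * 2 * odd_harm (Suc w)" for w
  proof -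
    have t: "(FF \<circ> hh 0 0) (a, w - a) = (1 / (2 * real w + 2))^2 * (1 / (2 * real a + 1) + 1 / (2 * real (w - a) + 1))" if "a \<le> w" for a
    proof -
      have "1 / (2 * real a + 1) * (1 / (2 * real (w - a) + 1)) * (1 / (2 * real w + 2)) = (1 / (2 * real w + 2))^2 * (1 / (2 * real a + 1) + 1 / (2 * real (w - a) + 1))"
        by (rule alg2[of "2 * real a" _ "2 * real (w - a)"]) (use that in \<open>simp_all add: field_simps of_nat_diff\<close>)
      moreover have "2 * real a + 2 * real (w - a) + 2 = 2 * real w + 2" using that by (simp add: of_nat_diff)
      ultimately show ?thesis by (simp add: FF_def hh_def)
    qed
    have "(\<Sum>a\<le>w. (FF \<circ> hh 0 0) (a, w - a)) = (\<Sum>a\<le>w. (1 / (2 * real w + 2))^2 * (1 / (2 * real a + 1) + 1 / (2 * real (w - a) + 1)))"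
      by (rule sum.cong[OF refl]) (rule t, simp)
    also have "\<dots> = (1 / (2 * real w + 2))^2 * ((\<Sum>a\<le>w. 1 / (2 * real a + 1)) + (\<Sum>a\<le>w. 1 / (2 * real (w - a) + 1)))"
      by (simp only: sum_distrib_left[symmetric] sum.distrib)
    also have "(\<Sum>a\<le>w. 1 / (2 * real (w - a) + 1)) = (\<Sum>a\<le>w. 1 / (2 * real a + 1))"
      by (rule sum_rev_atMost[of "\<lambda>a. 1 / (2 * real a + 1)"])
    also have "(\<Sum>a\<le>w. 1 / (2 * real a + 1)) = odd_harm (Suc w)"
      by (simp add: odd_harm_def lessThan_Suc_atMost)
    finally show ?thesis by simp
  qed
  from G4[OF hs11(1)] have "((\<lambda>w. (1 / (2 * real w + 2))^2 * 2 * odd_harm (Suc w)) has_sum P11) UNIV"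
    by (simp only: d11)
  hence "((\<lambda>w. 2 * ((1 / (2 * real w + 2))^2 * 2 * odd_harm (Suc w))) has_sum (2 * P11)) UNIV"
    by (rule has_sum_cmult_right)
  moreover have "2 * ((1 / (2 * real w + 2))^2 * 2 * odd_harm (Suc w)) = odd_harm (Suc w) / (real w + 1)^2" for w
    using alg3[of "real w" "1 / (2 * real w + 2)" "1 / (real w + 1)" "odd_harm (Suc w)"] by (simp add: power_one_over field_simps)
  ultimately have E11: "((\<lambda>w. odd_harm (Suc w) / (real w + 1)^2) has_sum (2 * P11)) UNIV" by simp
  have fib: "(\<lambda>b. (FF \<circ> hh 1 0) (a, b)) sums (odd_harm (Suc a) / (2 * real a + 2)^2)" for a
  proof -
    have lim: "(\<lambda>b. 1 / (2 * real b + 1)) \<longlonglongrightarrow> 0" by real_asymp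
    from sums_mult[OF TEL[OF lim, of "Suc a"], of "(1 / (2 * real a + 2))^2"]
    have "(\<lambda>b. (1 / (2 * real a + 2))^2 * (1 / (2 * real b + 1) - 1 / (2 * real (b + Suc a) + 1))) sums
         ((1 / (2 * real a + 2))^2 * (\<Sum>i<Suc a. 1 / (2 * real i + 1)))" .
    moreover have "(1 / (2 * real a + 2))^2 * (1 / (2 * real b + 1) - 1 / (2 * real (b + Suc a) + 1)) = (FF \<circ> hh 1 0) (a, b)" for b
    proof -
      have "(1 / (2 * real a + 2))^2 * (1 / (2 * real b + 1) - 1 / (2 * real (b + Suc a) + 1)) = 1 / (2 * real a + 2) * (1 / (2 * real b + 1)) * (1 / (2 * real (b + Suc a) + 1))"
        by (rule alg1[of "2 * real a + 1" _ "2 * real b"]) (simp_all add: field_simps)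
      thus ?thesis by (simp add: FF_def hh_def add_ac)
    qed
    ultimately show ?thesis by (simp add: odd_harm_def power_one_over)
  qed
  have "((\<lambda>a. odd_harm (Suc a) / (2 * real a + 2)^2) has_sum P01) UNIV"
    by (rule G2[OF hs01(1)]) (rule sums_nonneg_imp_has_sum[OF fib], simp add: FF_def hh_def)
  hence "((\<lambda>a. 4 * (odd_harm (Suc a) / (2 * real a + 2)^2)) has_sum (4 * P01)) UNIV"
    by (rule has_sum_cmult_right)
  moreover have "4 * (odd_harm (Suc a) / (2 * real a + 2)^2) = odd_harm (Suc a) / (real a + 1)^2" for a
    using alg4[of "real a" "1 / (2 * real a + 2)" "1 / (real a + 1)" "odd_harm (Suc a)"] by (simp add: power_one_over field_simps)
  ultimately have E01: "((\<lambda>w. odd_harm (Suc w) / (real w + 1)^2) has_sum (4 * P01)) UNIV" by simp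
  have "2 * P11 = 4 * P01" using E11 E01 has_sum_unique by blast
  with sumP P00 P10 have "P11 = 7 / 16 * P" by simp
  with E11 have "((\<lambda>w. odd_harm (Suc w) / (real w + 1)^2) has_sum (7/4 * zeta_real 3)) UNIV"
    by (simp add: P_def)
  thus ?thesis by (rule has_sum_imp_sums)
qed


lemma S4: "(\<lambda>w. harm (Suc w) / (real w + 2)^2) sums zeta_real 3"
  using S4_and_P by blast

lemma LN1: "(\<lambda>w. 1 / (2 * real w + 3) - 1 / (2 * real w + 4)) sums (ln 2 - 1/2)"
proof -
  have "(\<lambda>w. 1 / (2 * real (Suc w) + 1) - 1 / (2 * real (Suc w) + 2)) sums (ln 2 - 1/2)"
    using sums_Suc_iff[of "\<lambda>j. 1 / (2 * real j + 1) - 1 / (2 * real j + 2)" "ln 2 - 1/2"] LN by simp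
  thus ?thesis by (simp add: add_ac)
qed

lemma alg5: "(2*x+3)*p = 1 \<Longrightarrow> (x+2)*q = 1 \<Longrightarrow> (2*x+4)*u = 1 \<Longrightarrow> p * q^2 = 4 * (p - u) - (q::real)^2"
  by algebra

lemma OH: "(\<lambda>w. odd_harm (Suc w) / (real w + 2)^2) sums (7/4 * zeta_real 3 - 4 * ln 2 + zeta_real 2)"
proof -
  have a: "(\<lambda>w. odd_harm (Suc (Suc w)) / (real (Suc w) + 1)^2) sums (7/4 * zeta_real 3 - 1)"
    using sums_Suc_iff[of "\<lambda>w. odd_harm (Suc w) / (real w + 1)^2" "7/4 * zeta_real 3 - 1"] EO
    by (simp add: odd_harm_def)
  have b: "(\<lambda>w. 4 * (1 / (2 * real w + 3) - 1 / (2 * real w + 4)) - 1 / (real w + 2)^2) sums (4 * (ln 2 - 1/2) - (zeta_real 2 - 1))"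
    by (intro sums_diff sums_mult LN1 S5)
  have "odd_harm (Suc (Suc w)) / (real (Suc w) + 1)^2 - (4 * (1 / (2 * real w + 3) - 1 / (2 * real w + 4)) - 1 / (real w + 2)^2)
      = odd_harm (Suc w) / (real w + 2)^2" for w
  proof -
    have o: "odd_harm (Suc (Suc w)) = odd_harm (Suc w) + 1 / (2 * real w + 3)"
      by (simp add: odd_harm_def add_ac)
    have e: "real (Suc w) + 1 = real w + 2" by simp
    have h: "(real w + 2) * inverse (real w + 2) = 1" "(2 * real w + 3) * inverse (2 * real w + 3) = 1" "(2 * real w + 4) * inverse (2 * real w + 4) = 1"
      by (simp_all add: field_simps)
    show ?thesis
      unfolding o e
      apply (simp only: divide_inverse power_inverse[symmetric])
      using h by algebra
  qed
  note pw = this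
  have X: "(\<lambda>w. odd_harm (Suc w) / (real w + 2)^2) sums (7/4 * zeta_real 3 - 1 - (4 * (ln 2 - 1/2) - (zeta_real 2 - 1)))"
    using sums_diff[OF a b] by (simp only: pw)
  have eqv: "7/4 * zeta_real 3 - 1 - (4 * (ln 2 - 1/2) - (zeta_real 2 - 1)) = 7/4 * zeta_real 3 - 4 * ln 2 + zeta_real 2"
    by simp
  show ?thesis using X eqv by metis
qed

lemma S2: "(\<lambda>w. harm (2 * Suc w) / (real w + 2)^2) sums (9/4 * zeta_real 3 - 4 * ln 2 + zeta_real 2)"
proof -
  have "(\<lambda>w. odd_harm (Suc w) / (real w + 2)^2 + 1/2 * (harm (Suc w) / (real w + 2)^2)) sums
      ((7/4 * zeta_real 3 - 4 * ln 2 + zeta_real 2) + 1/2 * zeta_real 3)"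
    by (intro sums_add sums_mult OH S4)
  moreover have "odd_harm (Suc w) / (real w + 2)^2 + 1/2 * (harm (Suc w) / (real w + 2)^2) = harm (2 * Suc w) / (real w + 2)^2" for w
    by (simp only: harm_double[of "Suc w"]) (simp add: add_divide_distrib)
  ultimately have X: "(\<lambda>w. harm (2 * Suc w) / (real w + 2)^2) sums ((7/4 * zeta_real 3 - 4 * ln 2 + zeta_real 2) + 1/2 * zeta_real 3)"
    by (simp only:)
  have eqv: "(7/4 * zeta_real 3 - 4 * ln 2 + zeta_real 2) + 1/2 * zeta_real 3 = 9/4 * zeta_real 3 - 4 * ln 2 + zeta_real 2"
    by simp
  show ?thesis using X eqv by metis
qed

lemma alg6: "(x+1)*p = 1 \<Longrightarrow> (x+2)*q = 1 \<Longrightarrow>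
  ((x + 1 + 1/2) * H + h / 4 - (x + 1)) * (p * q^2) =
  1/2 * (H * (p * q)) + 1/2 * (H * q^2) + 1/4 * (h * (p * q)) - 1/4 * (h * q^2) - (q::real)^2"
  by algebra

lemma T_sums: "(\<lambda>w. (\<Sum>j\<le>w. harm (2 * Suc j)) * (1 / ((real w + 1) * (real w + 2)^2))) sums (1 + 7/8 * zeta_real 3 - ln 2)"
proof -
  have s: "(\<lambda>w. 1/2 * (harm (2 * Suc w) / ((real w + 1) * (real w + 2))) + 1/2 * (harm (2 * Suc w) / (real w + 2)^2)
     + 1/4 * (harm (Suc w) / ((real w + 1) * (real w + 2))) - 1/4 * (harm (Suc w) / (real w + 2)^2) - 1 / (real w + 2)^2)
     sums (1/2 * (2 * ln 2 + zeta_real 2 / 2) + 1/2 * (9/4 * zeta_real 3 - 4 * ln 2 + zeta_real 2)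
       + 1/4 * zeta_real 2 - 1/4 * zeta_real 3 - (zeta_real 2 - 1))"
    by (intro sums_add sums_diff sums_mult S1 S2 S3 S4 S5)
  have e: "(\<Sum>j\<le>w. harm (2 * Suc j)) * (1 / ((real w + 1) * (real w + 2)^2)) =
     1/2 * (harm (2 * Suc w) / ((real w + 1) * (real w + 2))) + 1/2 * (harm (2 * Suc w) / (real w + 2)^2)
     + 1/4 * (harm (Suc w) / ((real w + 1) * (real w + 2))) - 1/4 * (harm (Suc w) / (real w + 2)^2) - 1 / (real w + 2)^2" for w
  proof -
    have "(\<Sum>j\<le>w. harm (2 * Suc j)) = (\<Sum>j<Suc w. harm (2 * Suc j))" by (simp add: lessThan_Suc_atMost)
    also have "\<dots> = (real w + 1 + 1/2) * harm (2 * Suc w) + harm (Suc w) / 4 - (real w + 1)"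
      by (simp only: A_closed) simp
    finally have A: "(\<Sum>j\<le>w. harm (2 * Suc j)) = (real w + 1 + 1/2) * harm (2 * Suc w) + harm (Suc w) / 4 - (real w + 1)" .
    have "((real w + 1 + 1/2) * harm (2 * Suc w) + harm (Suc w) / 4 - (real w + 1)) * (1 / (real w + 1) * (1 / (real w + 2))^2) =
       1/2 * (harm (2 * Suc w) * (1 / (real w + 1) * (1 / (real w + 2)))) + 1/2 * (harm (2 * Suc w) * (1 / (real w + 2))^2)
     + 1/4 * (harm (Suc w) * (1 / (real w + 1) * (1 / (real w + 2)))) - 1/4 * (harm (Suc w) * (1 / (real w + 2))^2) - (1 / (real w + 2))^2"
      by (rule alg6) (simp_all add: field_simps)
    thus ?thesis by (simp only: A) (simp add: power_one_over)
  qed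
  have v: "1/2 * (2 * ln 2 + zeta_real 2 / 2) + 1/2 * (9/4 * zeta_real 3 - 4 * ln 2 + zeta_real 2)
       + 1/4 * zeta_real 2 - 1/4 * zeta_real 3 - (zeta_real 2 - 1) = 1 + 7/8 * zeta_real 3 - ln 2"
    by (simp add: algebra_simps)
  from s show ?thesis by (simp only: e[symmetric] v)
qed

lemma sum_shift1: "(\<Sum>i<n. 1 / (real (Suc i))^2) = (\<Sum>k=1..n. 1 / (real k)^2)"
  by (induction n) simp_all

lemma tail_main: "(\<lambda>d. 1 / ((real (j + d) + 1) * (real (j + d) + 2)^2)) sums
   (- (zeta_real 2 - (\<Sum>k=1..Suc j. 1 / (real k)^2) - 1 / real (Suc j)))"
proof -
  have a: "(\<lambda>d. 1 / (real (Suc (d + Suc j)))^2) sums (zeta_real 2 - (\<Sum>i<Suc j. 1 / (real (Suc i))^2))"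
    using sums_split_initial_segment[OF Z2, of "Suc j"] by simp
  have "(\<lambda>d. 1 / ((real (j + d) + 1) * (real (j + d) + 2)) - 1 / (real (Suc (d + Suc j)))^2) sums
     (1 / (real j + 1) - (zeta_real 2 - (\<Sum>i<Suc j. 1 / (real (Suc i))^2)))"
    by (intro sums_diff tail_v1 a)
  moreover have "1 / ((real (j + d) + 1) * (real (j + d) + 2)) - 1 / (real (Suc (d + Suc j)))^2 =
      1 / ((real (j + d) + 1) * (real (j + d) + 2)^2)" for d
  proof -
    have e: "real (Suc (d + Suc j)) = real (j + d) + 2" by simp
    have xx: "1 / ((x + 1) * (x + 2)) - 1 / (x + 2)^2 = 1 / ((x + 1) * (x + 2)^2)" if "x \<ge> 0" for x :: real
    proof -
      have h: "(x + 1) * inverse (x + 1) = 1" "(x + 2) * inverse (x + 2) = 1"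
        using that by (simp_all add: field_simps)
      show ?thesis
        apply (simp only: divide_inverse power_inverse[symmetric] inverse_mult_distrib)
        using h by algebra
    qed
    show ?thesis unfolding e by (rule xx) simp
  qed
  ultimately have X: "(\<lambda>d. 1 / ((real (j + d) + 1) * (real (j + d) + 2)^2)) sums
     (1 / (real j + 1) - (zeta_real 2 - (\<Sum>i<Suc j. 1 / (real (Suc i))^2)))"
    by (simp only:)
  have eqv: "1 / (real j + 1) - (zeta_real 2 - (\<Sum>i<Suc j. 1 / (real (Suc i))^2)) =
     - (zeta_real 2 - (\<Sum>k=1..Suc j. 1 / (real k)^2) - 1 / real (Suc j))"
    by (simp only: sum_shift1) simp
  show ?thesis using X eqv by metis
qed

theorem mainTheorem1:
  shows "(\<lambda>m. let n = Suc m in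
            harm (2 * n) * (zeta_real 2 - (\<Sum>k=1..n. 1 / (real k)^2) - 1 / real n))
         sums (ln 2 - 7 / 8 * zeta_real 3 - 1)"
proof -
  define t where "t j = - (zeta_real 2 - (\<Sum>k=1..Suc j. 1 / (real k)^2) - 1 / real (Suc j))" for j
  have "((\<lambda>w. (\<Sum>j\<le>w. harm (2 * Suc j)) * (1 / ((real w + 1) * (real w + 2)^2))) has_sum (1 + 7/8 * zeta_real 3 - ln 2)) UNIV"
    by (rule sums_nonneg_imp_has_sum[OF T_sums]) (simp add: sum_nonneg harm_nonneg)
  hence "((\<lambda>j. harm (2 * Suc j) * t j) has_sum (1 + 7/8 * zeta_real 3 - ln 2)) UNIV"
    by (subst ABEL[where v = "\<lambda>p. 1 / ((real p + 1) * (real p + 2)^2)"])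
       (use tail_main in \<open>simp_all add: harm_nonneg t_def\<close>)
  hence "(\<lambda>j. harm (2 * Suc j) * t j) sums (1 + 7/8 * zeta_real 3 - ln 2)" by (rule has_sum_imp_sums)
  hence "(\<lambda>j. - (harm (2 * Suc j) * t j)) sums (- (1 + 7/8 * zeta_real 3 - ln 2))" by (rule sums_minus)
  thus ?thesis by (simp add: t_def Let_def algebra_simps)
qed

end
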